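(* Let $h(\eta)$ be a radially homogeneous polynomial of degree $l$ on $T_p^*Y$, written as $h(\eta)=\sum_{j=0}^{l'}\eta_0^j h_j(\eta')$ with $h_j$ a homogeneous polynomial of degree $l-j$ and $h_{l'}\neq0$, where $l'\leq l$. Then for every integer $k$, $h(\eta)|\eta|^{-k}$ lifts to define an element of $S^{\,l-k,\;l'+l-2k,\;l'+l-2k}_{eH}$, and, as parabolically homogeneous functions on the half spaces $\pm\eta_0>0$, its Heisenberg principal symbols are $$(\pm1)^{l'}\,|\eta_0|^{l'-k}\,h_{l'}(\eta').$$
   Context: $Y$ is a co-oriented contact manifold of dimension $2n-1$ and $p\in Y$; Darboux coordinates centered at $p$ give linear coordinates $\eta=(\eta_0,\eta')$, $\eta'\in\mathbb{R}^{2(n-1)}$, on $T_p^*Y$, with the contact line $L_p=\{\eta'=0\}$. The radial compactification of $T_p^*Y$ adds a sphere at infinity with defining function $r_R=1/|\eta|$. The extended Heisenberg compactification is obtained from the radial one by parabolically blowing up (with parabolic direction the conormal to the boundary) the two boundary points of the closure of $L_p$; it has three boundary hypersurfaces: the classical face with defining function $r_c$ and the upper and lower Heisenberg faces (over $\eta_0\to+\infty$, resp. $-\infty$) with defining functions $r_{e+},r_{e-}$; in the interior of the Heisenberg faces $|\eta_0|^{-1/2}$ is a defining function. Extended Heisenberg symbols: $S^{m_c,m_+,m_-}_{eH}=r_c^{-m_c}r_{e+}^{-m_+}r_{e-}^{-m_-}C^\infty$ of the extended Heisenberg compactification. The Heisenberg principal symbols of such a symbol, of Heisenberg orders $m_\pm$,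 are the leading terms at the upper/lower Heisenberg faces, represented by functions on the half spaces $\pm\eta_0>0$ homogeneous of degree $m_\pm$ with respect to the parabolic dilation $(\eta_0,\eta')\mapsto(\lambda^2\eta_0,\lambda\eta')$. "Lifts" means the pullback to the extended Heisenberg compactification. *)

theory Defs
  imports "HOL-Analysis.Analysis"
begin

coinductive Cinf :: "'a::euclidean_space set \<Rightarrow> ('a \<Rightarrow> real) \<Rightarrow> bool" for U where
  "continuous_on U f \<Longrightarrow>
   (\<forall>b\<in>Basis. \<exists>g. (\<forall>x\<in>U. ((\<lambda>t. f (x + t *\<^sub>R b)) has_real_derivative g x) (at 0)) \<and> Cinf U g)
   \<Longrightarrow> Cinf U f"

definition smooth_upto :: "('a::euclidean_space \<Rightarrow> bool) \<Rightarrow> ('a \<Rightarrow> bool) \<Rightarrow> ('a \<Rightarrow> real) \<Rightarrow> bool" where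
  "smooth_upto Cl Op F \<longleftrightarrow>
     (\<forall>p. Cl p \<longrightarrow> (\<exists>U G. open U \<and> p \<in> U \<and> Cinf U G \<and> (\<forall>x\<in>U. Op x \<longrightarrow> G x = F x)))"

definition setj :: "'m::finite \<Rightarrow> real \<Rightarrow> real^'m \<Rightarrow> real^'m" where
  "setj j \<sigma> v = (\<chi> i. if i = j then \<sigma> else v $ i)"

text \<open>Extended Heisenberg symbols S^{mc,mp,mm}_{eH} on T_p^*Y = R x R^d,
  eta = (eta_0, eta').  a lies in r_c^{-mc} r_{e+}^{-mp} r_{e-}^{-mm} C^infty of the
  extended Heisenberg compactification, written out in an atlas of the
  compactification:
  (1) interior;
  (2) classical face away from the poles: rho = 1/|eta'_j|, u = eta_0 rho, v = eta' rho
      (projective charts of the radial compactification), r_c = rho;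
  (3) interior of the Heisenberg faces (eps = +-1): t = |eta_0|^{-1/2}, w = eta' t, r_e = t;
  (4) corners: s = |eta'_j|/|eta_0|, q = |eta_0|/eta'_j^2, v = eta'/eta'_j, r_e = s, r_c = q
      (projective coordinates of the parabolic blow-up with weights (2,1)).\<close>
definition S_eH :: "real \<Rightarrow> real \<Rightarrow> real \<Rightarrow> (real \<times> (real^'m::finite) \<Rightarrow> real) \<Rightarrow> bool" where
  "S_eH mc mp mm a \<longleftrightarrow>
     Cinf UNIV a
   \<and> (\<forall>j. \<forall>\<sigma>\<in>{1,-1}. smooth_upto (\<lambda>(\<rho>::real, u::real, v::real^'m). \<rho> \<ge> 0) (\<lambda>(\<rho>, u, v). \<rho> > 0)
          (\<lambda>(\<rho>, u, v). \<rho> powr mc * a (u / \<rho>, (1 / \<rho>) *\<^sub>R setj j \<sigma> v)))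
   \<and> (\<forall>\<epsilon>\<in>{1,-1}. smooth_upto (\<lambda>(t::real, w::real^'m). t \<ge> 0) (\<lambda>(t, w). t > 0)
          (\<lambda>(t, w). t powr (if \<epsilon> = 1 then mp else mm) * a (\<epsilon> / t\<^sup>2, (1 / t) *\<^sub>R w)))
   \<and> (\<forall>\<epsilon>\<in>{1,-1}. \<forall>j. \<forall>\<sigma>\<in>{1,-1}.
          smooth_upto (\<lambda>(s::real, q::real, v::real^'m). s \<ge> 0 \<and> q \<ge> 0) (\<lambda>(s, q, v). s > 0 \<and> q > 0)
          (\<lambda>(s, q, v). s powr (if \<epsilon> = 1 then mp else mm) * q powr mc *
              a (\<epsilon> / (s\<^sup>2 * q), (1 / (s * q)) *\<^sub>R setj j \<sigma> v)))"

definition parab_hom :: "real \<Rightarrow> real \<Rightarrow> (real \<times> (real^'m::finite) \<Rightarrow> real) \<Rightarrow> bool" where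
  "parab_hom m \<epsilon> p \<longleftrightarrow>
     (\<forall>c>0. \<forall>x0 x'. \<epsilon> * x0 > 0 \<longrightarrow> p (c\<^sup>2 * x0, c *\<^sub>R x') = c powr m * p (x0, x'))"

text \<open>p represents the Heisenberg principal symbol (of Heisenberg order m) of a at
  the upper (eps = 1) / lower (eps = -1) Heisenberg face: p is parabolically
  homogeneous of degree m on eps*eta_0 > 0 and equals the leading term of a there,
  i.e. the restriction of |eta_0|^{m/2} a to the face, extended homogeneously.\<close>
definition heis_symbol :: "real \<Rightarrow> real \<Rightarrow> (real \<times> (real^'m::finite) \<Rightarrow> real) \<Rightarrow> (real \<times> (real^'m) \<Rightarrow> real) \<Rightarrow> bool" where
  "heis_symbol m \<epsilon> a p \<longleftrightarrow> parab_hom m \<epsilon> p \<and>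
     (\<forall>x0 x'. \<epsilon> * x0 > 0 \<longrightarrow>
        ((\<lambda>c. c powr (- m) * a (c\<^sup>2 * x0, c *\<^sub>R x')) \<longlongrightarrow> p (x0, x')) at_top)"

definition hom_poly :: "nat \<Rightarrow> (real^'m::finite \<Rightarrow> real) \<Rightarrow> bool" where
  "hom_poly e f \<longleftrightarrow> (\<exists>S c. finite S \<and> (\<forall>\<alpha>\<in>S. (\<Sum>i\<in>UNIV. \<alpha> i) = e) \<and>
      (\<forall>x. f x = (\<Sum>\<alpha>\<in>S. c \<alpha> * (\<Prod>i\<in>UNIV. (x $ i) ^ (\<alpha> i)))))"

end

theory Submission
  imports Defs "HOL-Computational_Algebra.Polynomial"
begin


lemma Cinf_coind:
  assumes "X f"
    and step: "\<And>f. X f \<Longrightarrow> continuous_on U f \<and> (\<forall>b\<in>Basis. \<exists>g. (\<forall>x\<in>U. ((\<lambda>t. f (x + t *\<^sub>R b)) has_real_derivative g x) (at 0)) \<and> X g)"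
  shows "Cinf U f"
proof (rule Cinf.coinduct[of X, OF assms(1)])
  fix x assume "X x"
  note S = step[OF this]
  have "\<forall>b\<in>Basis. \<exists>g. (\<forall>y\<in>U. ((\<lambda>t. x (y + t *\<^sub>R b)) has_real_derivative g y) (at 0)) \<and> (X g \<or> Cinf U g)"
  proof
    fix b :: 'a assume "b \<in> Basis"
    with S obtain g where "\<forall>y\<in>U. ((\<lambda>t. x (y + t *\<^sub>R b)) has_real_derivative g y) (at 0)" "X g" by blast
    then show "\<exists>g. (\<forall>y\<in>U. ((\<lambda>t. x (y + t *\<^sub>R b)) has_real_derivative g y) (at 0)) \<and> (X g \<or> Cinf U g)" by blast
  qed
  with S show "\<exists>f. x = f \<and> continuous_on U f \<and> (\<forall>b\<in>Basis. \<exists>g. (\<forall>y\<in>U. ((\<lambda>t. f (y + t *\<^sub>R b)) has_real_derivative g y) (at 0)) \<and> (X g \<or> Cinf U g))"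
    by blast
qed

lemma Cinf_unfold:
  assumes "Cinf U f"
  shows "continuous_on U f \<and> (\<forall>b\<in>Basis. \<exists>g. (\<forall>x\<in>U. ((\<lambda>t. f (x + t *\<^sub>R b)) has_real_derivative g x) (at 0)) \<and> Cinf U g)"
  using assms by (cases rule: Cinf.cases) blast

inductive CAlg :: "'a::euclidean_space set \<Rightarrow> ('a \<Rightarrow> real) \<Rightarrow> bool" for U where
  base: "Cinf U f \<Longrightarrow> CAlg U f"
| add: "CAlg U f \<Longrightarrow> CAlg U g \<Longrightarrow> CAlg U (\<lambda>x. f x + g x)"
| mult: "CAlg U f \<Longrightarrow> CAlg U g \<Longrightarrow> CAlg U (\<lambda>x. f x * g x)"
| comp: "open V \<Longrightarrow> Cinf V (g::real\<Rightarrow>real) \<Longrightarrow> CAlg U f \<Longrightarrow> (\<forall>x\<in>U. f x \<in> V) \<Longrightarrow> CAlg U (\<lambda>x. g (f x))"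

lemma Cinf_real_deriv:
  assumes "Cinf V (g::real\<Rightarrow>real)"
  obtains g1 where "\<And>y. y \<in> V \<Longrightarrow> (g has_real_derivative g1 y) (at y)" "Cinf V g1" "continuous_on V g"
proof -
  from assms obtain g1 where "\<forall>y\<in>V. ((\<lambda>t. g (y + t *\<^sub>R 1)) has_real_derivative g1 y) (at 0)" "Cinf V g1"
    "continuous_on V g"
    by (cases rule: Cinf.cases) (auto simp: Basis_real_def)
  moreover have "(g has_real_derivative g1 y) (at y)" if "y \<in> V" for y
  proof -
    have "((\<lambda>t. g (t + y)) has_real_derivative g1 y) (at 0)"
      using calculation(1) that by (simp add: add.commute[of _ y])
    then show ?thesis using DERIV_shift[of g "g1 y" 0 y] by simp
  qed
  ultimately show ?thesis using that by blast
qed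

lemma CAlg_step:
  assumes "CAlg U f"
  shows "continuous_on U f \<and> (\<forall>b\<in>Basis. \<exists>g. (\<forall>x\<in>U. ((\<lambda>t. f (x + t *\<^sub>R b)) has_real_derivative g x) (at 0)) \<and> CAlg U g)"
  using assms
proof induction
  case (base f)
  then show ?case by (cases rule: Cinf.cases) (meson CAlg.base)
next
  case (add f g)
  have c: "continuous_on U (\<lambda>x. f x + g x)" using add by (intro continuous_intros) auto
  show ?case
  proof (intro conjI c ballI)
    fix b :: 'a assume b: "b \<in> Basis"
    from add b obtain f1 where f1: "\<forall>x\<in>U. ((\<lambda>t. f (x + t *\<^sub>R b)) has_real_derivative f1 x) (at 0)" "CAlg U f1" by blast
    from add b obtain g1 where g1: "\<forall>x\<in>U. ((\<lambda>t. g (x + t *\<^sub>R b)) has_real_derivative g1 x) (at 0)" "CAlg U g1" by blast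
    show "\<exists>h. (\<forall>x\<in>U. ((\<lambda>t. f (x + t *\<^sub>R b) + g (x + t *\<^sub>R b)) has_real_derivative h x) (at 0)) \<and> CAlg U h"
      by (rule exI[of _ "\<lambda>x. f1 x + g1 x"]) (use f1 g1 in \<open>auto intro!: DERIV_add CAlg.add\<close>)
  qed
next
  case (mult f g)
  have c: "continuous_on U (\<lambda>x. f x * g x)" using mult by (intro continuous_intros) auto
  show ?case
  proof (intro conjI c ballI)
    fix b :: 'a assume b: "b \<in> Basis"
    from mult b obtain f1 where f1: "\<forall>x\<in>U. ((\<lambda>t. f (x + t *\<^sub>R b)) has_real_derivative f1 x) (at 0)" "CAlg U f1" by blast
    from mult b obtain g1 where g1: "\<forall>x\<in>U. ((\<lambda>t. g (x + t *\<^sub>R b)) has_real_derivative g1 x) (at 0)" "CAlg U g1" by blast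
    have "((\<lambda>t. f (x + t *\<^sub>R b) * g (x + t *\<^sub>R b)) has_real_derivative (f x * g1 x + f1 x * g x)) (at 0)"
      if "x \<in> U" for x
      using DERIV_mult[OF f1(1)[rule_format, OF that] g1(1)[rule_format, OF that]] by (simp add: algebra_simps)
    then show "\<exists>h. (\<forall>x\<in>U. ((\<lambda>t. f (x + t *\<^sub>R b) * g (x + t *\<^sub>R b)) has_real_derivative h x) (at 0)) \<and> CAlg U h"
      using f1 g1 mult by (intro exI[of _ "\<lambda>x. f x * g1 x + f1 x * g x"]) (auto intro!: CAlg.add CAlg.mult)
  qed
next
  case (comp V g f)
  obtain g1 where g1: "\<And>y. y \<in> V \<Longrightarrow> (g has_real_derivative g1 y) (at y)" "Cinf V g1" "continuous_on V g"
    using Cinf_real_deriv[OF comp(2)] by blast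
  have c: "continuous_on U (\<lambda>x. g (f x))"
    using continuous_on_compose2[OF g1(3), of U f] comp by auto
  show ?case
  proof (intro conjI c ballI)
    fix b :: 'a assume b: "b \<in> Basis"
    from comp b obtain f1 where f1: "\<forall>x\<in>U. ((\<lambda>t. f (x + t *\<^sub>R b)) has_real_derivative f1 x) (at 0)" "CAlg U f1" by blast
    have "((\<lambda>t. g (f (x + t *\<^sub>R b))) has_real_derivative (g1 (f x) * f1 x)) (at 0)"
      if "x \<in> U" for x
    proof -
      have "(g has_real_derivative g1 (f x)) (at (f (x + 0 *\<^sub>R b)))" using g1(1) comp(4) that by simp
      from DERIV_chain2[OF this f1(1)[rule_format, OF that]] show ?thesis by simp
    qed
    note D = this
    show "\<exists>h. (\<forall>x\<in>U. ((\<lambda>t. g (f (x + t *\<^sub>R b))) has_real_derivative h x) (at 0)) \<and> CAlg U h"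
    proof (intro exI[of _ "\<lambda>x. g1 (f x) * f1 x"] conjI ballI)
      show "CAlg U (\<lambda>x. g1 (f x) * f1 x)"
        by (rule CAlg.mult[OF CAlg.comp[OF comp(1) g1(2) comp(3) comp(4)] f1(2)])
    qed (rule D)
  qed
qed

lemma CAlg_Cinf: "CAlg U f \<Longrightarrow> Cinf U f"
  by (erule Cinf_coind[where X="CAlg U"], erule CAlg_step)

lemma Cinf_add: "Cinf U f \<Longrightarrow> Cinf U g \<Longrightarrow> Cinf U (\<lambda>x. f x + g x)"
  by (rule CAlg_Cinf, rule CAlg.add, erule CAlg.base, erule CAlg.base)
lemma Cinf_mult: "Cinf U f \<Longrightarrow> Cinf U g \<Longrightarrow> Cinf U (\<lambda>x. f x * g x)"
  by (rule CAlg_Cinf, rule CAlg.mult, erule CAlg.base, erule CAlg.base)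
lemma Cinf_comp: "open V \<Longrightarrow> Cinf V (g::real\<Rightarrow>real) \<Longrightarrow> Cinf U f \<Longrightarrow> (\<And>x. x\<in>U \<Longrightarrow> f x \<in> V) \<Longrightarrow> Cinf U (\<lambda>x. g (f x))"
  by (rule CAlg_Cinf, rule CAlg.comp, assumption, assumption, erule CAlg.base, blast)

lemma Cinf_const: "Cinf U (\<lambda>x. c)"
  by (rule Cinf_coind[where X="\<lambda>f. \<exists>c. f = (\<lambda>x. c)"]) (auto intro!: exI[of _ "\<lambda>x. 0"])

lemma Cinf_linear: assumes "bounded_linear L" shows "Cinf U (L::'a::euclidean_space \<Rightarrow> real)"
proof (rule Cinf.intros)
  show "continuous_on U L" using assms linear_continuous_on by blast
  show "\<forall>b\<in>Basis. \<exists>g. (\<forall>x\<in>U. ((\<lambda>t. L (x + t *\<^sub>R b)) has_real_derivative g x) (at 0)) \<and> Cinf U g"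
  proof
    fix b :: 'a
    interpret bounded_linear L by fact
    have "((\<lambda>t. L (x + t *\<^sub>R b)) has_real_derivative L b) (at 0)" for x
    proof -
      have "((\<lambda>t. L x + t * L b) has_real_derivative L b) (at 0)"
        by (auto intro!: derivative_eq_intros)
      then show ?thesis by (simp add: add scale)
    qed
    then show "\<exists>g. (\<forall>x\<in>U. ((\<lambda>t. L (x + t *\<^sub>R b)) has_real_derivative g x) (at 0)) \<and> Cinf U g"
      by (intro exI[of _ "\<lambda>x. L b"] conjI Cinf_const) auto
  qed
qed

lemma Cinf_subset: assumes "Cinf U f" "U' \<subseteq> U" shows "Cinf U' f"
proof (rule Cinf_coind[where X="Cinf U"])
  fix f assume "Cinf U f"
  note S = Cinf_unfold[OF this]
  show "continuous_on U' f \<and> (\<forall>b\<in>Basis. \<exists>g. (\<forall>x\<in>U'. ((\<lambda>t. f (x + t *\<^sub>R b)) has_real_derivative g x) (at 0)) \<and> Cinf U g)"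
    using S assms(2) continuous_on_subset by blast
qed (fact assms(1))
lemma Cinf_sum: "finite S \<Longrightarrow> (\<And>i. i \<in> S \<Longrightarrow> Cinf U (f i)) \<Longrightarrow> Cinf U (\<lambda>x. \<Sum>i\<in>S. f i x)"
  by (induction S rule: finite_induct) (auto intro: Cinf_const Cinf_add)
lemma Cinf_prod: "finite S \<Longrightarrow> (\<And>i. i \<in> S \<Longrightarrow> Cinf U (f i)) \<Longrightarrow> Cinf U (\<lambda>x. \<Prod>i\<in>S. f i x)"
  by (induction S rule: finite_induct) (auto intro: Cinf_const Cinf_mult)
lemma Cinf_power: "Cinf U f \<Longrightarrow> Cinf U (\<lambda>x. f x ^ n)"
  by (induction n) (auto intro: Cinf_const Cinf_mult)



lemma real_coind:
  assumes "X (f::real\<Rightarrow>real)"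
    and step: "\<And>f. X f \<Longrightarrow> continuous_on U f \<and> (\<exists>g. (\<forall>x\<in>U. (f has_real_derivative g x) (at x)) \<and> X g)"
  shows "Cinf U f"
proof (rule Cinf_coind[where X=X, OF assms(1)])
  fix f assume "X f"
  from step[OF this] obtain g where c: "continuous_on U f" and g: "\<forall>x\<in>U. (f has_real_derivative g x) (at x)" "X g"
    by blast
  have "((\<lambda>t. f (x + t *\<^sub>R b)) has_real_derivative g x) (at 0)" if "x \<in> U" "b \<in> Basis" for x b
  proof -
    have b: "b = 1" using that by (simp add: Basis_real_def)
    have "(f has_real_derivative g x) (at (0 + x))" using g that by simp
    then have "((\<lambda>t. f (t + x)) has_real_derivative g x) (at 0)" using DERIV_shift by blast
    then show ?thesis by (simp add: b add.commute)
  qed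
  then show "continuous_on U f \<and> (\<forall>b\<in>Basis. \<exists>g. (\<forall>x\<in>U. ((\<lambda>t. f (x + t *\<^sub>R b)) has_real_derivative g x) (at 0)) \<and> X g)"
    using c g by blast
qed

lemma Cinf_powr: "Cinf {0<..} (\<lambda>x::real. x powr c)"
proof -
  have "Cinf {0<..} (\<lambda>x::real. d * x powr c)" for d
  proof (rule real_coind[where X="\<lambda>f. \<exists>c d. f = (\<lambda>x::real. d * x powr c)"])
    fix f :: "real \<Rightarrow> real" assume "\<exists>c d. f = (\<lambda>x. d * x powr c)"
    then obtain c d where f: "f = (\<lambda>x. d * x powr c)" by blast
    have "continuous_on {0<..} f" unfolding f by (intro continuous_intros) auto
    moreover have "\<forall>x\<in>{0<..}. (f has_real_derivative (d * c) * x powr (c - 1)) (at x)"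
      unfolding f using has_real_derivative_powr[of _ c] by (auto intro!: derivative_eq_intros)
    ultimately show "continuous_on {0<..} f \<and> (\<exists>g. (\<forall>x\<in>{0<..}. (f has_real_derivative g x) (at x)) \<and> (\<exists>c d. g = (\<lambda>x. d * x powr c)))"
      by (intro conjI exI[of _ "\<lambda>x. (d * c) * x powr (c - 1)"]) auto
  qed blast
  from this[of 1] show ?thesis by simp
qed

definition fb :: "real \<Rightarrow> real" where "fb y = (if y > 0 then exp (- 1 / y) else 0)"

lemma poly_exp_lim: "((\<lambda>t. poly P (1/t) * exp (- 1 / t)) \<longlongrightarrow> 0) (at_right (0::real))"
proof -
  have "((\<lambda>y. poly P y / exp y) \<longlongrightarrow> 0) at_top"
  proof -
    have "((\<lambda>y. \<Sum>i\<le>degree P. coeff P i * (y ^ i / exp y)) \<longlongrightarrow> 0) at_top"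
      by (intro tendsto_null_sum tendsto_mult_right_zero tendsto_power_div_exp_0)
    moreover have "(\<Sum>i\<le>degree P. coeff P i * (y ^ i / exp y)) = poly P y / exp y" for y
      by (simp add: poly_altdef sum_divide_distrib)
    ultimately show ?thesis by simp
  qed
  from filterlim_compose[OF this filterlim_inverse_at_top_right]
  have "((\<lambda>t. poly P (inverse t) / exp (inverse t)) \<longlongrightarrow> 0) (at_right (0::real))" by simp
  moreover have "poly P (1/t) * exp (- 1 / t) = poly P (inverse t) / exp (inverse (t::real))" for t
    by (simp add: inverse_eq_divide exp_minus)
  ultimately show ?thesis by simp
qed

lemma fb_smooth: "Cinf UNIV fb"
proof -
  define G where "G P = (\<lambda>y::real. if y > 0 then poly P (1/y) * exp (- 1 / y) else 0)" for P
  have "Cinf UNIV (G P)" for P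
  proof (rule real_coind[where X="\<lambda>f. \<exists>P. f = G P"])
    fix f assume "\<exists>P. f = G P"
    then obtain P where f: "f = G P" by blast
    define Q where "Q = monom 1 2 * (P - pderiv P)"
    have D: "(G P has_real_derivative G Q y) (at y)" for y
    proof (cases "y > 0")
      case True
      have "((\<lambda>y. poly P (1/y) * exp (- 1 / y)) has_real_derivative
             poly P (1/y) * (exp (- 1 / y) * (1 / y^2)) + poly (pderiv P) (1/y) * (- 1 / y^2) * exp (- 1 / y)) (at y)"
        using True
        apply (intro DERIV_mult')
         apply (rule DERIV_chain2[OF poly_DERIV])
        apply (auto intro!: derivative_eq_intros simp: power2_eq_square)
        done
      moreover have "poly P (1/y) * (exp (- 1 / y) * (1 / y^2)) + poly (pderiv P) (1/y) * (- 1 / y^2) * exp (- 1 / y)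
          = G Q y" using True by (simp add: G_def Q_def poly_monom field_simps)
      ultimately have "((\<lambda>y. poly P (1/y) * exp (- 1 / y)) has_real_derivative G Q y) (at y)" by simp
      then show ?thesis
        by (rule has_field_derivative_transform_within_open[where S="{0<..}"]) (use True in \<open>auto simp: G_def\<close>)
    next
      case False
      show ?thesis
      proof (cases "y < 0")
        case True
        have "((\<lambda>y. 0) has_real_derivative 0) (at y)" by simp
        then have "((\<lambda>y. 0) has_real_derivative G Q y) (at y)" using True by (simp add: G_def)
        then show ?thesis
          by (rule has_field_derivative_transform_within_open[where S="{..<0}"]) (use True in \<open>auto simp: G_def\<close>)
      next
        case False
        with \<open>\<not> y > 0\<close> have y: "y = 0" by simp
        have "((\<lambda>t. (G P t - G P 0) / (t - 0)) \<longlongrightarrow> 0) (at (0::real))"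
          unfolding filterlim_at_split
        proof
          show "((\<lambda>t. (G P t - G P 0) / (t - 0)) \<longlongrightarrow> 0) (at_left (0::real))"
            by (rule Lim_transform_eventually[OF tendsto_const]) (auto simp: G_def eventually_at_left_field intro: exI[of _ "-1"])
          have "((\<lambda>t. poly (P * [:0,1:]) (1/t) * exp (- 1 / t)) \<longlongrightarrow> 0) (at_right (0::real))"
            by (rule poly_exp_lim)
          then show "((\<lambda>t. (G P t - G P 0) / (t - 0)) \<longlongrightarrow> 0) (at_right (0::real))"
            by (rule Lim_transform_eventually) (auto simp: G_def eventually_at_right_field intro: exI[of _ "1"])
        qed
        then show ?thesis unfolding y has_field_derivative_iff by (simp add: G_def)
      qed
    qed
    have "continuous_on UNIV f" unfolding f
      by (rule continuous_at_imp_continuous_on) (use D DERIV_isCont in blast)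
    then show "continuous_on UNIV f \<and> (\<exists>g. (\<forall>x\<in>UNIV. (f has_real_derivative g x) (at x)) \<and> (\<exists>P. g = G P))"
      using D unfolding f by blast
  qed blast
  moreover have "G 1 = fb" by (rule ext) (simp add: G_def fb_def)
  ultimately show ?thesis by metis
qed



lemma Cinf_cong: assumes "open U" "Cinf U f" "\<And>x. x\<in>U \<Longrightarrow> f x = g x" shows "Cinf U g"
proof (rule Cinf_coind[where X="\<lambda>g. \<exists>f. Cinf U f \<and> (\<forall>x\<in>U. f x = g x)"])
  show "\<exists>f. Cinf U f \<and> (\<forall>x\<in>U. f x = g x)" using assms by blast
next
  fix g assume "\<exists>f. Cinf U f \<and> (\<forall>x\<in>U. f x = g x)"
  then obtain f where f: "Cinf U f" "\<forall>x\<in>U. f x = g x" by blast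
  note S = Cinf_unfold[OF f(1)]
  have "continuous_on U g" using S f(2) continuous_on_cong by blast
  moreover have "\<exists>d. (\<forall>x\<in>U. ((\<lambda>t. g (x + t *\<^sub>R b)) has_real_derivative d x) (at 0)) \<and> (\<exists>f. Cinf U f \<and> (\<forall>x\<in>U. f x = d x))"
    if b: "b \<in> Basis" for b
  proof -
    from S b obtain d where d: "\<forall>x\<in>U. ((\<lambda>t. f (x + t *\<^sub>R b)) has_real_derivative d x) (at 0)" "Cinf U d" by blast
    have "((\<lambda>t. g (x + t *\<^sub>R b)) has_real_derivative d x) (at 0)" if x: "x \<in> U" for x
    proof (rule has_field_derivative_transform_within_open[OF d(1)[rule_format, OF x]])
      show "open ((\<lambda>t::real. x + t *\<^sub>R b) -` U)"
        by (rule open_vimage[OF assms(1)]) (intro continuous_intros)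
      show "0 \<in> (\<lambda>t::real. x + t *\<^sub>R b) -` U" using x by simp
    qed (use f(2) in auto)
    then show ?thesis using d(2) by blast
  qed
  ultimately show "continuous_on U g \<and> (\<forall>b\<in>Basis. \<exists>d. (\<forall>x\<in>U. ((\<lambda>t. g (x + t *\<^sub>R b)) has_real_derivative d x) (at 0)) \<and> (\<exists>f. Cinf U f \<and> (\<forall>x\<in>U. f x = d x)))"
    by blast
qed

lemma Cinf_inverse: "Cinf {0<..} (inverse :: real \<Rightarrow> real)"
  by (rule Cinf_cong[OF _ Cinf_powr[of "-1"]]) (auto simp: powr_minus)

lemma Cinf_compp: "open V \<Longrightarrow> Cinf V (g::real\<Rightarrow>real) \<Longrightarrow> Cinf U f \<Longrightarrow> (\<And>x. x\<in>U \<Longrightarrow> f x \<in> V) \<Longrightarrow> Cinf U (\<lambda>x. g (f x))"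
  by (rule Cinf_comp)

definition RR :: "real \<Rightarrow> real" where "RR r = r + (2 - r) * fb (1 - r)"

lemma RR_smooth: "Cinf UNIV RR"
proof -
  have l: "Cinf UNIV (\<lambda>r::real. c - r)" for c
    by (rule Cinf_add[OF Cinf_const, of _ "\<lambda>r. - r", simplified])
       (rule Cinf_linear, rule bounded_linear_minus[OF bounded_linear_ident])
  have "Cinf UNIV (\<lambda>r. r + (2 - r) * fb (1 - r))"
    by (intro Cinf_add Cinf_mult Cinf_linear[OF bounded_linear_ident] l Cinf_comp[OF _ fb_smooth l]) auto
  then show ?thesis unfolding RR_def[abs_def] .
qed

lemma RR_pos: "RR r > 0"
proof (cases "r < 1")
  case True
  define y where "y = 1 - r"
  have y: "y > 0" using True y_def by simp
  have e: "1 - 1 / y \<le> exp (- 1 / y)"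
    using exp_ge_add_one_self[of "- 1 / y"] by simp
  have R: "RR r = 1 - y + (1 + y) * exp (- 1 / y)" unfolding RR_def fb_def using y y_def by simp
  show ?thesis
  proof (cases "y \<le> 1")
    case True
    then show ?thesis unfolding R using y by (simp add: add_nonneg_pos)
  next
    case False
    have "(1 + y) * (1 - 1 / y) \<le> (1 + y) * exp (- 1 / y)" using e y by (intro mult_left_mono) auto
    moreover have "(1 + y) * (1 - 1 / y) = y - 1 / y" using y by (simp add: field_simps)
    moreover have "1 / y < 1" using False by simp
    ultimately show ?thesis unfolding R by linarith
  qed
next
  case False
  then show ?thesis unfolding RR_def fb_def by simp
qed

lemma RR_ge1: "r \<ge> 1 \<Longrightarrow> RR r = r"
  unfolding RR_def fb_def by simp



lemma normsq_vec: "norm (x::real^'m::finite) ^ 2 = (\<Sum>i\<in>UNIV. (x $ i)^2)"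
  by (simp only: power2_norm_eq_inner inner_vec_def) (simp add: power2_eq_square)

lemma normsq_pair: "norm (a::real, x::real^'m::finite) ^ 2 = a^2 + norm x ^ 2"
  by (simp add: norm_Pair)

definition hh :: "(nat \<Rightarrow> real^'m::finite \<Rightarrow> real) \<Rightarrow> nat \<Rightarrow> real \<times> (real^'m) \<Rightarrow> real" where
  "hh hs l' \<eta> = (\<Sum>j\<le>l'. fst \<eta> ^ j * hs j (snd \<eta>))"

definition gk :: "int \<Rightarrow> real \<Rightarrow> real" where "gk k r = RR r powr (- real_of_int k / 2)"

definition aa :: "(nat \<Rightarrow> real^'m::finite \<Rightarrow> real) \<Rightarrow> nat \<Rightarrow> int \<Rightarrow> real \<times> (real^'m) \<Rightarrow> real" where
  "aa hs l' k \<eta> = hh hs l' \<eta> * gk k (norm \<eta> ^ 2)"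

lemma gk_smooth: "Cinf UNIV (gk k)"
proof -
  have "Cinf UNIV (\<lambda>r. (\<lambda>y. y powr (- real_of_int k / 2)) (RR r))"
    by (rule Cinf_comp[OF _ Cinf_powr RR_smooth]) (auto simp: RR_pos)
  then show ?thesis unfolding gk_def[abs_def] by simp
qed

lemma hom_scale:
  assumes "hom_poly e f"
  shows "f (c *\<^sub>R x) = c ^ e * f x"
proof -
  from assms obtain S co where S: "finite S" "\<forall>\<alpha>\<in>S. (\<Sum>i\<in>UNIV. \<alpha> i) = e"
    "\<forall>x. f x = (\<Sum>\<alpha>\<in>S. co \<alpha> * (\<Prod>i\<in>UNIV. (x $ i) ^ (\<alpha> i)))"
    unfolding hom_poly_def by blast
  have "(\<Prod>i\<in>UNIV. ((c *\<^sub>R x) $ i) ^ (\<alpha> i)) = c ^ e * (\<Prod>i\<in>UNIV. (x $ i) ^ (\<alpha> i))" if "\<alpha> \<in> S" for \<alpha>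
  proof -
    have "(\<Prod>i\<in>UNIV. ((c *\<^sub>R x) $ i) ^ (\<alpha> i)) = (\<Prod>i\<in>UNIV. c ^ (\<alpha> i) * (x $ i) ^ (\<alpha> i))"
      by (simp add: power_mult_distrib)
    also have "\<dots> = (\<Prod>i\<in>UNIV. c ^ (\<alpha> i)) * (\<Prod>i\<in>UNIV. (x $ i) ^ (\<alpha> i))"
      by (rule prod.distrib)
    also have "(\<Prod>i\<in>UNIV. c ^ (\<alpha> i)) = c ^ e"
      using S(2) that by (simp add: power_sum[symmetric])
    finally show ?thesis .
  qed
  then show ?thesis
    using S(3) by (simp add: sum_distrib_left mult.left_commute)
qed

lemma Cinf_hom:
  assumes "hom_poly e f" "\<And>i. Cinf U (\<lambda>z. \<psi> z $ i)"
  shows "Cinf U (\<lambda>z. f (\<psi> z))"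
proof -
  from assms obtain S co where S: "finite S"
    "\<forall>x. f x = (\<Sum>\<alpha>\<in>S. co \<alpha> * (\<Prod>i\<in>UNIV. (x $ i) ^ (\<alpha> i)))"
    unfolding hom_poly_def by blast
  have "Cinf U (\<lambda>z. \<Sum>\<alpha>\<in>S. co \<alpha> * (\<Prod>i\<in>UNIV. (\<psi> z $ i) ^ (\<alpha> i)))"
    by (intro Cinf_sum S(1) Cinf_mult Cinf_const Cinf_prod finite Cinf_power assms(2))
  then show ?thesis using S(2) by simp
qed

lemma pw_ipow: "x > 0 \<Longrightarrow> (1 / (x::real)) ^ n = x powr (- real n)"
  by (simp add: powr_minus powr_realpow divide_inverse power_inverse)
lemma pw_pow: "x > 0 \<Longrightarrow> (x::real) ^ n = x powr (real n)"
  by (simp add: powr_realpow)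
lemma pw_powr: "x > 0 \<Longrightarrow> ((x::real) ^ n) powr a = x powr (real n * a)"
  by (simp add: powr_realpow[symmetric] powr_powr)
lemma pw_ipowr: "x > 0 \<Longrightarrow> ((1/(x::real)) ^ n) powr a = x powr (- real n * a)"
  by (simp add: pw_ipow powr_powr)

context
  fixes hs :: "nat \<Rightarrow> real^'m::finite \<Rightarrow> real" and l l' :: nat and k :: int
  assumes l'l: "l' \<le> l" and hom: "\<And>j. j \<le> l' \<Longrightarrow> hom_poly (l - j) (hs j)"
begin

lemma Cinf_hh:
  assumes "Cinf U \<phi>0" "\<And>i. Cinf U (\<lambda>z. \<phi> z $ i)"
  shows "Cinf U (\<lambda>z. \<Sum>j\<le>l'. \<phi>0 z ^ j * hs j (\<phi> z))"
  by (intro Cinf_sum finite_atMost Cinf_mult Cinf_power assms(1) Cinf_hom[OF hom assms(2)]) auto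

lemma Cinf_aa:
  assumes "Cinf U \<phi>0" "\<And>i. Cinf U (\<lambda>z. \<phi> z $ i)"
  shows "Cinf U (\<lambda>z. aa hs l' k (\<phi>0 z, \<phi> z))"
proof -
  have "Cinf U (\<lambda>z. (\<Sum>j\<le>l'. \<phi>0 z ^ j * hs j (\<phi> z)) * gk k (\<phi>0 z ^ 2 + (\<Sum>i\<in>UNIV. (\<phi> z $ i)^2)))"
    by (intro Cinf_mult Cinf_hh assms Cinf_comp[OF _ gk_smooth] Cinf_add Cinf_power Cinf_sum finite) auto
  then show ?thesis unfolding aa_def hh_def by (simp add: normsq_pair normsq_vec)
qed

lemma aa_big: "norm \<eta> \<ge> 1 \<Longrightarrow> aa hs l' k \<eta> = hh hs l' \<eta> * norm \<eta> powr (- real_of_int k)"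
proof -
  assume n: "norm \<eta> \<ge> 1"
  then have "norm \<eta> ^ 2 \<ge> 1" by (simp add: one_le_power)
  then have "gk k (norm \<eta> ^ 2) = (norm \<eta> ^ 2) powr (- real_of_int k / 2)" unfolding gk_def by (simp add: RR_ge1)
  also have "\<dots> = norm \<eta> powr (- real_of_int k)"
  proof -
    have e: "norm \<eta> ^ 2 = norm \<eta> powr 2" using n powr_realpow[of "norm \<eta>" 2] by simp
    show ?thesis by (subst e, simp only: powr_powr) simp
  qed
  finally show ?thesis unfolding aa_def by simp
qed

lemma hh_parab:
  "hh hs l' (c^2 * x0, c *\<^sub>R x) = (\<Sum>j\<le>l'. c ^ (l + j) * x0 ^ j * hs j x)"
  unfolding hh_def
proof (intro sum.cong refl)
  fix j assume "j \<in> {..l'}"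
  then have j: "j \<le> l'" by simp
  have "fst (c\<^sup>2 * x0, c *\<^sub>R x) ^ j * hs j (snd (c\<^sup>2 * x0, c *\<^sub>R x)) = c ^ (2 * j) * x0 ^ j * (c ^ (l - j) * hs j x)"
    using hom_scale[OF hom[OF j]] by (simp add: power_mult_distrib power_mult)
  also have "\<dots> = c ^ (l + j) * x0 ^ j * hs j x"
    using j l'l by (simp add: power_add[symmetric] algebra_simps)
  finally show "fst (c\<^sup>2 * x0, c *\<^sub>R x) ^ j * hs j (snd (c\<^sup>2 * x0, c *\<^sub>R x)) = c ^ (l + j) * x0 ^ j * hs j x" .
qed

end


lemma norm_setj: "\<sigma> \<in> {1,-1} \<Longrightarrow> norm (setj j \<sigma> v) \<ge> 1"
proof -
  assume "\<sigma> \<in> {1,-1}"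
  then have "\<bar>setj j \<sigma> v $ j\<bar> = 1" unfolding setj_def by auto
  then show ?thesis using component_le_norm_cart[of "setj j \<sigma> v" j] by simp
qed

lemma bl_fst: "bounded_linear (\<lambda>z::real \<times> 'b::real_normed_vector. fst z)" by (rule bounded_linear_fst)
lemma bl_fst_snd: "bounded_linear (\<lambda>z::'a::real_normed_vector \<times> real \<times> 'b::real_normed_vector. fst (snd z))"
  by (rule bounded_linear_compose[OF bounded_linear_fst bounded_linear_snd])
lemma bl_snd_nth: "bounded_linear (\<lambda>z::'a::real_normed_vector \<times> (real^'m). snd z $ i)"
  by (rule bounded_linear_compose[OF bounded_linear_vec_nth bounded_linear_snd])
lemma bl_snd_snd_nth: "bounded_linear (\<lambda>z::'a::real_normed_vector \<times> 'b::real_normed_vector \<times> (real^'m). snd (snd z) $ i)"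
  by (rule bounded_linear_compose[OF bounded_linear_vec_nth bounded_linear_compose[OF bounded_linear_snd bounded_linear_snd]])

lemma Cinf_inv_fst:
  "Cinf {z::real \<times> 'b::euclidean_space. fst z > 0} (\<lambda>z. inverse (fst z))"
  by (rule Cinf_comp[OF _ Cinf_inverse Cinf_linear[OF bounded_linear_fst]]) auto

lemma Cinf_setj:
  assumes "\<And>i. Cinf U (\<lambda>z. \<psi> z $ i)"
  shows "Cinf U (\<lambda>z. setj j \<sigma> (\<psi> z) $ i)"
  unfolding setj_def by (cases "i = j") (auto intro: assms Cinf_const)

context
  fixes hs :: "nat \<Rightarrow> real^'m::finite \<Rightarrow> real" and l l' :: nat and k :: int
  assumes l'l: "l' \<le> l" and hom: "\<And>j. j \<le> l' \<Longrightarrow> hom_poly (l - j) (hs j)"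
begin

lemma npowr: "t > 0 \<Longrightarrow> t powr (- real_of_int k) = (t ^ 2) powr (- real_of_int k / 2)"
  by (simp add: pw_powr)

lemma aa_parab:
  assumes c: "c > 0" and n: "norm (c^2 * x0, c *\<^sub>R x) \<ge> 1"
  shows "aa hs l' k (c^2 * x0, c *\<^sub>R x) = (\<Sum>j\<le>l'. c ^ (l + j) * x0 ^ j * hs j x) * (c^4 * x0^2 + c^2 * norm x ^ 2) powr (- real_of_int k / 2)"
proof -
  have "aa hs l' k (c^2 * x0, c *\<^sub>R x) = hh hs l' (c^2 * x0, c *\<^sub>R x) * norm (c^2 * x0, c *\<^sub>R x) powr (- real_of_int k)"
    by (rule aa_big[OF l'l hom n])
  also have "hh hs l' (c^2 * x0, c *\<^sub>R x) = (\<Sum>j\<le>l'. c ^ (l + j) * x0 ^ j * hs j x)"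
    by (rule hh_parab[OF l'l hom])
  also have "norm (c^2 * x0, c *\<^sub>R x) powr (- real_of_int k) = (norm (c^2 * x0, c *\<^sub>R x) ^ 2) powr (- real_of_int k / 2)"
    using n by (intro npowr) auto
  also have "norm (c^2 * x0, c *\<^sub>R x) ^ 2 = c^4 * x0^2 + c^2 * norm x ^ 2"
    by (simp add: normsq_pair power_mult_distrib)
  finally show ?thesis .
qed

lemma chart2_eq:
  assumes r: "0 < \<rho>" "\<rho> < 1" and w: "norm w \<ge> 1"
  shows "\<rho> powr (real l - real_of_int k) * aa hs l' k (u / \<rho>, (1 / \<rho>) *\<^sub>R w)
       = (\<Sum>n\<le>l'. u ^ n * hs n w) * (u^2 + norm w ^ 2) powr (- real_of_int k / 2)"
proof -
  define c where "c = 1 / \<rho>"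
  have c: "c > 0" "c \<ge> 1" "c * \<rho> = 1" using r unfolding c_def by auto
  have pt: "(u / \<rho>, (1 / \<rho>) *\<^sub>R w) = (c^2 * (u * \<rho>), c *\<^sub>R w)"
    using r unfolding c_def by (simp add: power2_eq_square field_simps)
  have "1 * 1 \<le> c * norm w" using c w by (intro mult_mono) auto
  then have "norm (c *\<^sub>R w) \<ge> 1" using c by simp
  then have n: "norm (c^2 * (u * \<rho>), c *\<^sub>R w) \<ge> 1"
    using norm_snd_le[of "c *\<^sub>R w" "c^2 * (u * \<rho>)"] by linarith
  have "aa hs l' k (u / \<rho>, (1 / \<rho>) *\<^sub>R w) = (\<Sum>n\<le>l'. c ^ (l + n) * (u * \<rho>) ^ n * hs n w) *
      (c^4 * (u * \<rho>)^2 + c^2 * norm w ^ 2) powr (- real_of_int k / 2)"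
    unfolding pt by (rule aa_parab[OF c(1) n])
  also have "(\<Sum>n\<le>l'. c ^ (l + n) * (u * \<rho>) ^ n * hs n w) = c ^ l * (\<Sum>n\<le>l'. u ^ n * hs n w)"
    unfolding sum_distrib_left
  proof (intro sum.cong refl)
    fix n
    have "c ^ (l + n) * (u * \<rho>) ^ n = c ^ l * u ^ n * (c * \<rho>) ^ n"
      by (simp add: power_add power_mult_distrib)
    then show "c ^ (l + n) * (u * \<rho>) ^ n * hs n w = c ^ l * (u ^ n * hs n w)" using c by simp
  qed
  also have "c^4 * (u * \<rho>)^2 + c^2 * norm w ^ 2 = c^2 * (u^2 + norm w ^ 2)"
  proof -
    have "c^4 * (u * \<rho>)^2 = c^2 * u^2 * (c * \<rho>)^2" by algebra
    also have "(c * \<rho>)^2 = 1" using c(3) by simp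
    finally have "c^4 * (u * \<rho>)^2 = c^2 * u^2" by simp
    then show ?thesis by (simp add: algebra_simps)
  qed
  also have "(c^2 * (u^2 + norm w ^ 2)) powr (- real_of_int k / 2) = (c^2) powr (- real_of_int k / 2) * (u^2 + norm w ^ 2) powr (- real_of_int k / 2)"
    by (rule powr_mult)
  finally have "\<rho> powr (real l - real_of_int k) * aa hs l' k (u / \<rho>, (1 / \<rho>) *\<^sub>R w) =
     (\<rho> powr (real l - real_of_int k) * (1/\<rho>) ^ l * ((1/\<rho>)^2) powr (- real_of_int k / 2)) *
     ((\<Sum>n\<le>l'. u ^ n * hs n w) * (u^2 + norm w ^ 2) powr (- real_of_int k / 2))"
    unfolding c_def by (simp add: ac_simps)
  also have "\<rho> powr (real l - real_of_int k) * (1/\<rho>) ^ l * ((1/\<rho>)^2) powr (- real_of_int k / 2) = 1"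
    using r(1)
    apply (simp only: pw_ipow powr_powr)
    apply (simp only: powr_add[symmetric])
    apply simp
    done
  finally show ?thesis by simp
qed

lemma chart2:
  assumes \<sigma>: "\<sigma> \<in> {1,-1}"
  shows "smooth_upto (\<lambda>(\<rho>::real, u::real, v::real^'m). \<rho> \<ge> 0) (\<lambda>(\<rho>, u, v). \<rho> > 0)
          (\<lambda>(\<rho>, u, v). \<rho> powr (real l - real_of_int k) * aa hs l' k (u / \<rho>, (1 / \<rho>) *\<^sub>R setj j \<sigma> v))"
  unfolding smooth_upto_def
proof (intro allI impI)
  fix p :: "real \<times> real \<times> (real^'m)"
  assume "case p of (\<rho>, u, v) \<Rightarrow> \<rho> \<ge> 0"
  then have p0: "fst p \<ge> 0" by (simp add: case_prod_unfold)
  define F where "F = (\<lambda>z::real \<times> real \<times> (real^'m). fst z powr (real l - real_of_int k) *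
       aa hs l' k (fst (snd z) / fst z, (1 / fst z) *\<^sub>R setj j \<sigma> (snd (snd z))))"
  have FF: "(\<lambda>(\<rho>, u, v). \<rho> powr (real l - real_of_int k) * aa hs l' k (u / \<rho>, (1 / \<rho>) *\<^sub>R setj j \<sigma> v)) = F"
    unfolding F_def by (simp add: case_prod_unfold)
  have OP: "(case x of (\<rho>::real, u::real, v::real^'m) \<Rightarrow> \<rho> > 0) = (fst x > 0)" for x
    by (simp add: case_prod_unfold)
  show "\<exists>U G. open U \<and> p \<in> U \<and> Cinf U G \<and> (\<forall>x\<in>U. (case x of (\<rho>, u, v) \<Rightarrow> 0 < \<rho>) \<longrightarrow>
          G x = (case x of (\<rho>, u, v) \<Rightarrow> \<rho> powr (real l - real_of_int k) * aa hs l' k (u / \<rho>, (1 / \<rho>) *\<^sub>R setj j \<sigma> v)))"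
    unfolding OP FF
  proof (cases "fst p > 0")
    case True
    define U where "U = {z::real \<times> real \<times> (real^'m). fst z > 0}"
    have oU: "open U" unfolding U_def
      using open_vimage_fst[OF open_greaterThan[of 0]] by (simp add: vimage_def)
    have I: "Cinf U (\<lambda>z. inverse (fst z))" unfolding U_def by (rule Cinf_inv_fst)
    have "Cinf U (\<lambda>z. fst z powr (real l - real_of_int k))"
      by (rule Cinf_comp[OF _ Cinf_powr Cinf_linear[OF bounded_linear_fst]]) (auto simp: U_def)
    moreover have "Cinf U (\<lambda>z. aa hs l' k (fst (snd z) / fst z, (1 / fst z) *\<^sub>R setj j \<sigma> (snd (snd z))))"
    proof (rule Cinf_aa[OF l'l hom])
      have "Cinf U (\<lambda>z. fst (snd z) * inverse (fst z))"
        by (rule Cinf_mult[OF Cinf_linear[OF bl_fst_snd] I])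
      then show "Cinf U (\<lambda>z. fst (snd z) / fst z)" by (simp add: divide_inverse)
      fix i
      have "Cinf U (\<lambda>z. inverse (fst z) * setj j \<sigma> (snd (snd z)) $ i)"
        by (rule Cinf_mult[OF I Cinf_setj[OF Cinf_linear[OF bl_snd_snd_nth]]])
      then show "Cinf U (\<lambda>z. ((1 / fst z) *\<^sub>R setj j \<sigma> (snd (snd z))) $ i)"
        by (simp add: divide_inverse)
    qed
    ultimately have "Cinf U F" unfolding F_def by (rule Cinf_mult)
    then show "\<exists>U G. open U \<and> p \<in> U \<and> Cinf U G \<and> (\<forall>x\<in>U. 0 < fst x \<longrightarrow> G x = F x)"
      using oU True by (intro exI[of _ U] exI[of _ F]) (auto simp: U_def)
  next
    case False
    define U where "U = {z::real \<times> real \<times> (real^'m). fst z < 1}"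
    have oU: "open U" unfolding U_def
      using open_vimage_fst[OF open_lessThan[of 1]] by (simp add: vimage_def)
    define G where "G = (\<lambda>z::real \<times> real \<times> (real^'m). (\<Sum>n\<le>l'. fst (snd z) ^ n * hs n (setj j \<sigma> (snd (snd z)))) *
       (fst (snd z) ^ 2 + (\<Sum>i\<in>UNIV. (setj j \<sigma> (snd (snd z)) $ i)^2)) powr (- real_of_int k / 2))"
    have W: "Cinf U (\<lambda>z. setj j \<sigma> (snd (snd z)) $ i)" for i
      by (rule Cinf_setj[OF Cinf_linear[OF bl_snd_snd_nth]])
    have pos: "fst (snd z) ^ 2 + (\<Sum>i\<in>UNIV. (setj j \<sigma> (snd (snd z)) $ i)^2) > 0" for z
    proof -
      have "norm (setj j \<sigma> (snd (snd z))) \<ge> 1" by (rule norm_setj[OF \<sigma>])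
      then have "norm (setj j \<sigma> (snd (snd z))) ^ 2 \<ge> 1" by (rule one_le_power)
      moreover have "fst (snd z) ^ 2 \<ge> 0" by simp
      ultimately show ?thesis unfolding normsq_vec[symmetric] by linarith
    qed
    have "Cinf U G" unfolding G_def
      by (intro Cinf_mult Cinf_hh[OF l'l hom] Cinf_linear[OF bl_fst_snd] W
          Cinf_comp[OF _ Cinf_powr] Cinf_add Cinf_power Cinf_sum finite) (auto simp: pos)
    moreover have "G x = F x" if "x \<in> U" "0 < fst x" for x
    proof -
      have "norm (setj j \<sigma> (snd (snd x))) \<ge> 1" by (rule norm_setj[OF \<sigma>])
      from chart2_eq[OF _ _ this, of "fst x" "fst (snd x)"] that
      show ?thesis unfolding F_def G_def by (simp add: U_def normsq_vec)
    qed
    ultimately show "\<exists>U G. open U \<and> p \<in> U \<and> Cinf U G \<and> (\<forall>x\<in>U. 0 < fst x \<longrightarrow> G x = F x)"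
      using oU False p0 by (intro exI[of _ U] exI[of _ G]) (auto simp: U_def)
  qed
qed

end


lemma Cinf_inv_fst1:
  "Cinf {z::real \<times> 'b::euclidean_space. fst z > 0} (\<lambda>z. inverse (fst z))"
  by (rule Cinf_comp[OF _ Cinf_inverse Cinf_linear[OF bounded_linear_fst]]) auto

context
  fixes hs :: "nat \<Rightarrow> real^'m::finite \<Rightarrow> real" and l l' :: nat and k :: int
  assumes l'l: "l' \<le> l" and hom: "\<And>j. j \<le> l' \<Longrightarrow> hom_poly (l - j) (hs j)"
begin

lemma chart3_eq:
  assumes t: "0 < t" "t < 1" and e: "\<epsilon>^2 = 1"
  shows "t powr (real l' + real l - 2 * real_of_int k) * aa hs l' k (\<epsilon> / t^2, (1 / t) *\<^sub>R w)
       = (\<Sum>n\<le>l'. \<epsilon> ^ n * t ^ (l' - n) * hs n w) * (1 + t^2 * norm w ^ 2) powr (- real_of_int k / 2)"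
proof -
  define c where "c = 1 / t"
  have c: "c > 0" "c \<ge> 1" "c * t = 1" using t unfolding c_def by auto
  have pt: "(\<epsilon> / t^2, (1 / t) *\<^sub>R w) = (c^2 * \<epsilon>, c *\<^sub>R w)"
    using t unfolding c_def by (simp add: power2_eq_square field_simps)
  have "1 \<le> c^2" using c by (simp add: one_le_power)
  moreover have "\<bar>\<epsilon>\<bar> = 1" using e by (simp add: power2_eq_1_iff) (metis abs_minus_cancel abs_one)
  ultimately have "norm (c^2 * \<epsilon>) \<ge> 1" by (simp add: abs_mult)
  then have n: "norm (c^2 * \<epsilon>, c *\<^sub>R w) \<ge> 1"
    using norm_fst_le[of "c^2 * \<epsilon>" "c *\<^sub>R w"] by linarith
  have "aa hs l' k (\<epsilon> / t^2, (1 / t) *\<^sub>R w) = (\<Sum>n\<le>l'. c ^ (l + n) * \<epsilon> ^ n * hs n w) *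
      (c^4 * \<epsilon>^2 + c^2 * norm w ^ 2) powr (- real_of_int k / 2)"
    unfolding pt by (rule aa_parab[OF l'l hom c(1) n])
  also have "(\<Sum>n\<le>l'. c ^ (l + n) * \<epsilon> ^ n * hs n w) = c ^ (l + l') * (\<Sum>n\<le>l'. \<epsilon> ^ n * t ^ (l' - n) * hs n w)"
    unfolding sum_distrib_left
  proof (intro sum.cong refl)
    fix n assume "n \<in> {..l'}"
    then have nl: "l + l' = (l + n) + (l' - n)" by simp
    have "c ^ (l + l') * t ^ (l' - n) = c ^ (l + n) * (c * t) ^ (l' - n)"
      unfolding nl by (simp add: power_add power_mult_distrib)
    then have "c ^ (l + l') * t ^ (l' - n) = c ^ (l + n)" using c by simp
    then show "c ^ (l + n) * \<epsilon> ^ n * hs n w = c ^ (l + l') * (\<epsilon> ^ n * t ^ (l' - n) * hs n w)"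
      by (simp add: ac_simps)
  qed
  also have "c^4 * \<epsilon>^2 + c^2 * norm w ^ 2 = c^4 * (1 + t^2 * norm w ^ 2)"
  proof -
    have "c^4 * t^2 = c^2 * (c * t)^2" by algebra
    then have "c^4 * t^2 = c^2" using c by simp
    then show ?thesis using e by (simp add: algebra_simps)
  qed
  also have "(c^4 * (1 + t^2 * norm w ^ 2)) powr (- real_of_int k / 2) = (c^4) powr (- real_of_int k / 2) * (1 + t^2 * norm w ^ 2) powr (- real_of_int k / 2)"
    by (rule powr_mult)
  finally have "t powr (real l' + real l - 2 * real_of_int k) * aa hs l' k (\<epsilon> / t^2, (1 / t) *\<^sub>R w) =
     (t powr (real l' + real l - 2 * real_of_int k) * (1/t) ^ (l + l') * ((1/t)^4) powr (- real_of_int k / 2)) *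
     ((\<Sum>n\<le>l'. \<epsilon> ^ n * t ^ (l' - n) * hs n w) * (1 + t^2 * norm w ^ 2) powr (- real_of_int k / 2))"
    unfolding c_def by (simp add: ac_simps)
  also have "t powr (real l' + real l - 2 * real_of_int k) * (1/t) ^ (l + l') * ((1/t)^4) powr (- real_of_int k / 2) = 1"
    using t(1)
    apply (simp only: pw_ipow powr_powr)
    apply (simp only: powr_add[symmetric])
    apply simp
    done
  finally show ?thesis by simp
qed

lemma chart3:
  assumes e: "\<epsilon> \<in> {1,-1}"
  shows "smooth_upto (\<lambda>(t::real, w::real^'m). t \<ge> 0) (\<lambda>(t, w). t > 0)
          (\<lambda>(t, w). t powr (real l' + real l - 2 * real_of_int k) * aa hs l' k (\<epsilon> / t\<^sup>2, (1 / t) *\<^sub>R w))"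
  unfolding smooth_upto_def
proof (intro allI impI)
  fix p :: "real \<times> (real^'m)"
  assume "case p of (t, w) \<Rightarrow> t \<ge> 0"
  then have p0: "fst p \<ge> 0" by (simp add: case_prod_unfold)
  have e2: "\<epsilon>^2 = 1" using e by auto
  define F where "F = (\<lambda>z::real \<times> (real^'m). fst z powr (real l' + real l - 2 * real_of_int k) *
       aa hs l' k (\<epsilon> / (fst z)\<^sup>2, (1 / fst z) *\<^sub>R snd z))"
  have FF: "(\<lambda>(t, w). t powr (real l' + real l - 2 * real_of_int k) * aa hs l' k (\<epsilon> / t\<^sup>2, (1 / t) *\<^sub>R w)) = F"
    unfolding F_def by (simp add: case_prod_unfold)
  have OP: "(case x of (t::real, w::real^'m) \<Rightarrow> t > 0) = (fst x > 0)" for x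
    by (simp add: case_prod_unfold)
  show "\<exists>U G. open U \<and> p \<in> U \<and> Cinf U G \<and> (\<forall>x\<in>U. (case x of (t, w) \<Rightarrow> 0 < t) \<longrightarrow>
          G x = (case x of (t, w) \<Rightarrow> t powr (real l' + real l - 2 * real_of_int k) * aa hs l' k (\<epsilon> / t\<^sup>2, (1 / t) *\<^sub>R w)))"
    unfolding OP FF
  proof (cases "fst p > 0")
    case True
    define U where "U = {z::real \<times> (real^'m). fst z > 0}"
    have oU: "open U" unfolding U_def
      using open_vimage_fst[OF open_greaterThan[of 0]] by (simp add: vimage_def)
    have I: "Cinf U (\<lambda>z. inverse (fst z))" unfolding U_def by (rule Cinf_inv_fst1)
    have "Cinf U (\<lambda>z. fst z powr (real l' + real l - 2 * real_of_int k))"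
      by (rule Cinf_comp[OF _ Cinf_powr Cinf_linear[OF bounded_linear_fst]]) (auto simp: U_def)
    moreover have "Cinf U (\<lambda>z. aa hs l' k (\<epsilon> / (fst z)\<^sup>2, (1 / fst z) *\<^sub>R snd z))"
    proof (rule Cinf_aa[OF l'l hom])
      have "Cinf U (\<lambda>z. \<epsilon> * (inverse (fst z) * inverse (fst z)))"
        by (rule Cinf_mult[OF Cinf_const Cinf_mult[OF I I]])
      then show "Cinf U (\<lambda>z. \<epsilon> / (fst z)\<^sup>2)" by (simp add: divide_inverse power2_eq_square)
      fix i
      have "Cinf U (\<lambda>z. inverse (fst z) * snd z $ i)"
        by (rule Cinf_mult[OF I Cinf_linear[OF bl_snd_nth]])
      then show "Cinf U (\<lambda>z. ((1 / fst z) *\<^sub>R snd z) $ i)"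
        by (simp add: divide_inverse)
    qed
    ultimately have "Cinf U F" unfolding F_def by (rule Cinf_mult)
    then show "\<exists>U G. open U \<and> p \<in> U \<and> Cinf U G \<and> (\<forall>x\<in>U. 0 < fst x \<longrightarrow> G x = F x)"
      using oU True by (intro exI[of _ U] exI[of _ F]) (auto simp: U_def)
  next
    case False
    define U where "U = {z::real \<times> (real^'m). fst z < 1}"
    have oU: "open U" unfolding U_def
      using open_vimage_fst[OF open_lessThan[of 1]] by (simp add: vimage_def)
    define G where "G = (\<lambda>z::real \<times> (real^'m). (\<Sum>n\<le>l'. \<epsilon> ^ n * fst z ^ (l' - n) * hs n (snd z)) *
       (1 + fst z ^ 2 * (\<Sum>i\<in>UNIV. (snd z $ i)^2)) powr (- real_of_int k / 2))"
    have W: "Cinf U (\<lambda>z. snd z $ i)" for i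
      by (rule Cinf_linear[OF bl_snd_nth])
    have T: "Cinf U (\<lambda>z. fst z)" by (rule Cinf_linear[OF bounded_linear_fst])
    have pos: "1 + fst z ^ 2 * (\<Sum>i\<in>UNIV. (snd z $ i)^2) > 0" for z :: "real \<times> (real^'m)"
    proof -
      have "fst z ^ 2 * (\<Sum>i\<in>UNIV. (snd z $ i)^2) \<ge> 0" by (intro mult_nonneg_nonneg sum_nonneg) auto
      then show ?thesis by linarith
    qed
    have "Cinf U G" unfolding G_def
      by (intro Cinf_mult Cinf_sum finite_atMost Cinf_const Cinf_power T Cinf_hom[OF hom] W
          Cinf_comp[OF _ Cinf_powr] Cinf_add Cinf_sum finite) (auto simp: pos)
    moreover have "G x = F x" if "x \<in> U" "0 < fst x" for x
      using chart3_eq[OF _ _ e2, of "fst x" "snd x"] that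
      unfolding F_def G_def by (simp add: U_def normsq_vec)
    ultimately show "\<exists>U G. open U \<and> p \<in> U \<and> Cinf U G \<and> (\<forall>x\<in>U. 0 < fst x \<longrightarrow> G x = F x)"
      using oU False p0 by (intro exI[of _ U] exI[of _ G]) (auto simp: U_def)
  qed
qed

lemma chart4_eq:
  assumes sq: "0 < s" "0 < q" "s * q < 1" and w: "norm w \<ge> 1" and e: "\<epsilon>^2 = 1"
  shows "s powr (real l' + real l - 2 * real_of_int k) * q powr (real l - real_of_int k) *
           aa hs l' k (\<epsilon> / (s\<^sup>2 * q), (1 / (s * q)) *\<^sub>R w)
       = (\<Sum>n\<le>l'. \<epsilon> ^ n * s ^ (l' - n) * hs n w) * (1 + s^2 * norm w ^ 2) powr (- real_of_int k / 2)"
proof -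
  define c where "c = 1 / (s * q)"
  have c: "c > 0" "c \<ge> 1" "c * (s * q) = 1" using sq unfolding c_def by auto
  have cc: "c = (1/s) * (1/q)" unfolding c_def by simp
  have pt: "(\<epsilon> / (s\<^sup>2 * q), (1 / (s * q)) *\<^sub>R w) = (c^2 * (\<epsilon> * q), c *\<^sub>R w)"
    using sq unfolding c_def by (simp add: power2_eq_square field_simps)
  have "1 * 1 \<le> c * norm w" using c w by (intro mult_mono) auto
  then have "norm (c *\<^sub>R w) \<ge> 1" using c by simp
  then have n: "norm (c^2 * (\<epsilon> * q), c *\<^sub>R w) \<ge> 1"
    using norm_snd_le[of "c *\<^sub>R w" "c^2 * (\<epsilon> * q)"] by linarith
  have "aa hs l' k (\<epsilon> / (s\<^sup>2 * q), (1 / (s * q)) *\<^sub>R w) = (\<Sum>n\<le>l'. c ^ (l + n) * (\<epsilon> * q) ^ n * hs n w) *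
      (c^4 * (\<epsilon> * q)^2 + c^2 * norm w ^ 2) powr (- real_of_int k / 2)"
    unfolding pt by (rule aa_parab[OF l'l hom c(1) n])
  also have "(\<Sum>n\<le>l'. c ^ (l + n) * (\<epsilon> * q) ^ n * hs n w) =
      ((1/s) ^ (l + l') * (1/q) ^ l) * (\<Sum>n\<le>l'. \<epsilon> ^ n * s ^ (l' - n) * hs n w)"
    unfolding sum_distrib_left
  proof (intro sum.cong refl)
    fix n assume "n \<in> {..l'}"
    then have nl: "l + l' = (l + n) + (l' - n)" by simp
    have q1: "(1/q) ^ (l + n) * q ^ n = (1/q) ^ l" using sq by (simp add: power_add power_mult_distrib[symmetric])
    have s1: "(1/s) ^ (l + l') * s ^ (l' - n) = (1/s) ^ (l + n)"
      unfolding nl using sq by (simp add: power_add power_mult_distrib[symmetric])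
    have "c ^ (l + n) * (\<epsilon> * q) ^ n = \<epsilon> ^ n * ((1/s) ^ (l + n) * ((1/q) ^ (l + n) * q ^ n))"
      unfolding cc power_mult_distrib by (simp only: mult_ac)
    also have "\<dots> = \<epsilon> ^ n * ((1/s) ^ (l + l') * s ^ (l' - n) * (1/q) ^ l)" unfolding q1 s1 ..
    finally show "c ^ (l + n) * (\<epsilon> * q) ^ n * hs n w = (1/s) ^ (l + l') * (1/q) ^ l * (\<epsilon> ^ n * s ^ (l' - n) * hs n w)"
      by (simp add: ac_simps)
  qed
  also have "c^4 * (\<epsilon> * q)^2 + c^2 * norm w ^ 2 = ((1/s)^4 * (1/q)^2) * (1 + s^2 * norm w ^ 2)"
  proof -
    define A where "A = (1/s)^4 * (1/q)^2"
    have cq: "c^4 * q^2 = A" unfolding cc A_def using sq by (simp add: power_mult_distrib eval_nat_numeral field_simps)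
    have "c^4 * q^2 * s^2 = c^2 * (c * (s * q))^2" by algebra
    then have As: "A * s^2 = c^2" using c cq by simp
    have eq: "(\<epsilon> * q)^2 = q^2" using e by (simp add: power_mult_distrib)
    have "c^4 * (\<epsilon> * q)^2 + c^2 * norm w ^ 2 = A + (A * s^2) * norm w ^ 2" unfolding eq cq As ..
    also have "\<dots> = A * (1 + s^2 * norm w ^ 2)" by (simp add: algebra_simps)
    finally show ?thesis unfolding A_def .
  qed
  also have "(((1/s)^4 * (1/q)^2) * (1 + s^2 * norm w ^ 2)) powr (- real_of_int k / 2) =
      ((1/s)^4) powr (- real_of_int k / 2) * ((1/q)^2) powr (- real_of_int k / 2) * (1 + s^2 * norm w ^ 2) powr (- real_of_int k / 2)"
    by (simp add: powr_mult)
  finally have "s powr (real l' + real l - 2 * real_of_int k) * q powr (real l - real_of_int k) *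
           aa hs l' k (\<epsilon> / (s\<^sup>2 * q), (1 / (s * q)) *\<^sub>R w) =
     (s powr (real l' + real l - 2 * real_of_int k) * (1/s) ^ (l + l') * ((1/s)^4) powr (- real_of_int k / 2)) *
     (q powr (real l - real_of_int k) * (1/q) ^ l * ((1/q)^2) powr (- real_of_int k / 2)) *
     ((\<Sum>n\<le>l'. \<epsilon> ^ n * s ^ (l' - n) * hs n w) * (1 + s^2 * norm w ^ 2) powr (- real_of_int k / 2))"
    by (simp add: ac_simps)
  also have "s powr (real l' + real l - 2 * real_of_int k) * (1/s) ^ (l + l') * ((1/s)^4) powr (- real_of_int k / 2) = 1"
    using sq(1)
    apply (simp only: pw_ipow powr_powr)
    apply (simp only: powr_add[symmetric])
    apply simp
    done
  also have "q powr (real l - real_of_int k) * (1/q) ^ l * ((1/q)^2) powr (- real_of_int k / 2) = 1"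
    using sq(2)
    apply (simp only: pw_ipow powr_powr)
    apply (simp only: powr_add[symmetric])
    apply simp
    done
  finally show ?thesis by simp
qed

lemma chart4:
  assumes e: "\<epsilon> \<in> {1,-1}" and \<sigma>: "\<sigma> \<in> {1,-1}"
  shows "smooth_upto (\<lambda>(s::real, q::real, v::real^'m). s \<ge> 0 \<and> q \<ge> 0) (\<lambda>(s, q, v). s > 0 \<and> q > 0)
          (\<lambda>(s, q, v). s powr (real l' + real l - 2 * real_of_int k) * q powr (real l - real_of_int k) *
              aa hs l' k (\<epsilon> / (s\<^sup>2 * q), (1 / (s * q)) *\<^sub>R setj j \<sigma> v))"
  unfolding smooth_upto_def
proof (intro allI impI)
  fix p :: "real \<times> real \<times> (real^'m)"
  assume "case p of (s, q, v) \<Rightarrow> s \<ge> 0 \<and> q \<ge> 0"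
  then have p0: "fst p \<ge> 0" "fst (snd p) \<ge> 0" by (simp_all add: case_prod_unfold)
  have e2: "\<epsilon>^2 = 1" using e by auto
  define F where "F = (\<lambda>z::real \<times> real \<times> (real^'m). fst z powr (real l' + real l - 2 * real_of_int k) *
       fst (snd z) powr (real l - real_of_int k) *
       aa hs l' k (\<epsilon> / ((fst z)\<^sup>2 * fst (snd z)), (1 / (fst z * fst (snd z))) *\<^sub>R setj j \<sigma> (snd (snd z))))"
  have FF: "(\<lambda>(s, q, v). s powr (real l' + real l - 2 * real_of_int k) * q powr (real l - real_of_int k) *
              aa hs l' k (\<epsilon> / (s\<^sup>2 * q), (1 / (s * q)) *\<^sub>R setj j \<sigma> v)) = F"
    unfolding F_def by (simp add: case_prod_unfold)
  have OP: "(case x of (s::real, q::real, v::real^'m) \<Rightarrow> s > 0 \<and> q > 0) = (fst x > 0 \<and> fst (snd x) > 0)" for x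
    by (simp add: case_prod_unfold)
  show "\<exists>U G. open U \<and> p \<in> U \<and> Cinf U G \<and> (\<forall>x\<in>U. (case x of (s, q, v) \<Rightarrow> 0 < s \<and> 0 < q) \<longrightarrow>
          G x = (case x of (s, q, v) \<Rightarrow> s powr (real l' + real l - 2 * real_of_int k) * q powr (real l - real_of_int k) *
              aa hs l' k (\<epsilon> / (s\<^sup>2 * q), (1 / (s * q)) *\<^sub>R setj j \<sigma> v)))"
    unfolding OP FF
  proof (cases "fst p > 0 \<and> fst (snd p) > 0")
    case True
    define U where "U = {z::real \<times> real \<times> (real^'m). fst z > 0 \<and> fst (snd z) > 0}"
    have oU: "open U" unfolding U_def
      by (rule open_Collect_conj; rule open_Collect_less) (intro continuous_intros)+
    have I: "Cinf U (\<lambda>z. inverse (fst z))"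
      by (rule Cinf_comp[OF _ Cinf_inverse Cinf_linear[OF bounded_linear_fst]]) (auto simp: U_def)
    have J: "Cinf U (\<lambda>z. inverse (fst (snd z)))"
      by (rule Cinf_comp[OF _ Cinf_inverse Cinf_linear[OF bl_fst_snd]]) (auto simp: U_def)
    have "Cinf U (\<lambda>z. fst z powr (real l' + real l - 2 * real_of_int k))"
      by (rule Cinf_comp[OF _ Cinf_powr Cinf_linear[OF bounded_linear_fst]]) (auto simp: U_def)
    moreover have "Cinf U (\<lambda>z. fst (snd z) powr (real l - real_of_int k))"
      by (rule Cinf_comp[OF _ Cinf_powr Cinf_linear[OF bl_fst_snd]]) (auto simp: U_def)
    moreover have "Cinf U (\<lambda>z. aa hs l' k (\<epsilon> / ((fst z)\<^sup>2 * fst (snd z)), (1 / (fst z * fst (snd z))) *\<^sub>R setj j \<sigma> (snd (snd z))))"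
    proof (rule Cinf_aa[OF l'l hom])
      have "Cinf U (\<lambda>z. \<epsilon> * ((inverse (fst z) * inverse (fst z)) * inverse (fst (snd z))))"
        by (rule Cinf_mult[OF Cinf_const Cinf_mult[OF Cinf_mult[OF I I] J]])
      then show "Cinf U (\<lambda>z. \<epsilon> / ((fst z)\<^sup>2 * fst (snd z)))" by (simp add: divide_inverse power2_eq_square)
      fix i
      have "Cinf U (\<lambda>z. (inverse (fst z) * inverse (fst (snd z))) * setj j \<sigma> (snd (snd z)) $ i)"
        by (rule Cinf_mult[OF Cinf_mult[OF I J] Cinf_setj[OF Cinf_linear[OF bl_snd_snd_nth]]])
      then show "Cinf U (\<lambda>z. ((1 / (fst z * fst (snd z))) *\<^sub>R setj j \<sigma> (snd (snd z))) $ i)"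
        by (simp add: divide_inverse)
    qed
    ultimately have "Cinf U F" unfolding F_def by (intro Cinf_mult)
    then show "\<exists>U G. open U \<and> p \<in> U \<and> Cinf U G \<and> (\<forall>x\<in>U. 0 < fst x \<and> 0 < fst (snd x) \<longrightarrow> G x = F x)"
      using oU True by (intro exI[of _ U] exI[of _ F]) (auto simp: U_def)
  next
    case False
    define U where "U = {z::real \<times> real \<times> (real^'m). fst z * fst (snd z) < 1}"
    have oU: "open U" unfolding U_def
      by (rule open_Collect_less) (intro continuous_intros)+
    have pU: "p \<in> U"
    proof -
      have "fst p = 0 \<or> fst (snd p) = 0" using False p0 by auto
      then show ?thesis by (auto simp: U_def)
    qed
    define G where "G = (\<lambda>z::real \<times> real \<times> (real^'m). (\<Sum>n\<le>l'. \<epsilon> ^ n * fst z ^ (l' - n) * hs n (setj j \<sigma> (snd (snd z)))) *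
       (1 + fst z ^ 2 * (\<Sum>i\<in>UNIV. (setj j \<sigma> (snd (snd z)) $ i)^2)) powr (- real_of_int k / 2))"
    have W: "Cinf U (\<lambda>z. setj j \<sigma> (snd (snd z)) $ i)" for i
      by (rule Cinf_setj[OF Cinf_linear[OF bl_snd_snd_nth]])
    have T: "Cinf U (\<lambda>z. fst z)" by (rule Cinf_linear[OF bounded_linear_fst])
    have pos: "1 + fst z ^ 2 * (\<Sum>i\<in>UNIV. (setj j \<sigma> (snd (snd z)) $ i)^2) > 0" for z :: "real \<times> real \<times> (real^'m)"
    proof -
      have "fst z ^ 2 * (\<Sum>i\<in>UNIV. (setj j \<sigma> (snd (snd z)) $ i)^2) \<ge> 0" by (intro mult_nonneg_nonneg sum_nonneg) auto
      then show ?thesis by linarith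
    qed
    have "Cinf U G" unfolding G_def
      by (intro Cinf_mult Cinf_sum finite_atMost Cinf_const Cinf_power T Cinf_hom[OF hom] W
          Cinf_comp[OF _ Cinf_powr] Cinf_add Cinf_sum finite) (auto simp: pos)
    moreover have "G x = F x" if "x \<in> U" "0 < fst x \<and> 0 < fst (snd x)" for x
    proof -
      have "norm (setj j \<sigma> (snd (snd x))) \<ge> 1" by (rule norm_setj[OF \<sigma>])
      from chart4_eq[of "fst x" "fst (snd x)", OF _ _ _ this e2] that
      show ?thesis unfolding F_def G_def by (simp add: U_def normsq_vec)
    qed
    ultimately show "\<exists>U G. open U \<and> p \<in> U \<and> Cinf U G \<and> (\<forall>x\<in>U. 0 < fst x \<and> 0 < fst (snd x) \<longrightarrow> G x = F x)"
      using oU pU by (intro exI[of _ U] exI[of _ G]) auto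
  qed
qed

end


context
  fixes hs :: "nat \<Rightarrow> real^'m::finite \<Rightarrow> real" and l l' :: nat and k :: int
  assumes l'l: "l' \<le> l" and hom: "\<And>j. j \<le> l' \<Longrightarrow> hom_poly (l - j) (hs j)"
begin

lemma heis:
  assumes e: "\<epsilon> \<in> {1,-1}"
  shows "heis_symbol (real l' + real l - 2 * real_of_int k) \<epsilon> (aa hs l' k)
           (\<lambda>(x0, x'). \<epsilon> ^ l' * \<bar>x0\<bar> powr (real l' - real_of_int k) * hs l' x')"
  unfolding heis_symbol_def
proof (intro conjI)
  define m where "m = real l' + real l - 2 * real_of_int k"
  show "parab_hom (real l' + real l - 2 * real_of_int k) \<epsilon> (\<lambda>(x0, x'). \<epsilon> ^ l' * \<bar>x0\<bar> powr (real l' - real_of_int k) * hs l' x')"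
    unfolding parab_hom_def
  proof (intro allI impI)
    fix c x0 :: real and x' :: "real^'m"
    assume c: "c > 0"
    have h: "hs l' (c *\<^sub>R x') = c ^ (l - l') * hs l' x'" by (rule hom_scale[OF hom[OF order_refl]])
    have "\<bar>c\<^sup>2 * x0\<bar> powr (real l' - real_of_int k) = (c^2) powr (real l' - real_of_int k) * \<bar>x0\<bar> powr (real l' - real_of_int k)"
      by (simp add: abs_mult powr_mult)
    also have "(c^2) powr (real l' - real_of_int k) = c powr (2 * (real l' - real_of_int k))"
      using c by (simp add: pw_powr)
    finally have A: "\<bar>c\<^sup>2 * x0\<bar> powr (real l' - real_of_int k) = c powr (2 * (real l' - real_of_int k)) * \<bar>x0\<bar> powr (real l' - real_of_int k)" .
    have B: "c powr (2 * (real l' - real_of_int k)) * c ^ (l - l') = c powr (real l' + real l - 2 * real_of_int k)"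
      using c l'l by (simp add: pw_pow powr_add[symmetric] of_nat_diff algebra_simps)
    show "(case (c\<^sup>2 * x0, c *\<^sub>R x') of (x0, x') \<Rightarrow> \<epsilon> ^ l' * \<bar>x0\<bar> powr (real l' - real_of_int k) * hs l' x') =
          c powr (real l' + real l - 2 * real_of_int k) * (case (x0, x') of (x0, x') \<Rightarrow> \<epsilon> ^ l' * \<bar>x0\<bar> powr (real l' - real_of_int k) * hs l' x')"
    proof -
      have "(case (c\<^sup>2 * x0, c *\<^sub>R x') of (x0, x') \<Rightarrow> \<epsilon> ^ l' * \<bar>x0\<bar> powr (real l' - real_of_int k) * hs l' x')
          = \<epsilon> ^ l' * \<bar>c\<^sup>2 * x0\<bar> powr (real l' - real_of_int k) * hs l' (c *\<^sub>R x')" by (simp only: prod.case)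
      also have "\<dots> = \<epsilon> ^ l' * (c powr (2 * (real l' - real_of_int k)) * \<bar>x0\<bar> powr (real l' - real_of_int k)) * (c ^ (l - l') * hs l' x')"
        by (simp only: A h)
      also have "\<dots> = (c powr (2 * (real l' - real_of_int k)) * c ^ (l - l')) * (\<epsilon> ^ l' * \<bar>x0\<bar> powr (real l' - real_of_int k) * hs l' x')"
        by (simp only: mult_ac)
      also have "\<dots> = c powr (real l' + real l - 2 * real_of_int k) * (case (x0, x') of (x0, x') \<Rightarrow> \<epsilon> ^ l' * \<bar>x0\<bar> powr (real l' - real_of_int k) * hs l' x')"
        by (simp only: B prod.case)
      finally show ?thesis .
    qed
  qed
  show "\<forall>x0 x'. 0 < \<epsilon> * x0 \<longrightarrow> ((\<lambda>c. c powr - (real l' + real l - 2 * real_of_int k) * aa hs l' k (c\<^sup>2 * x0, c *\<^sub>R x')) \<longlongrightarrow>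
          (case (x0, x') of (x0, x') \<Rightarrow> \<epsilon> ^ l' * \<bar>x0\<bar> powr (real l' - real_of_int k) * hs l' x')) at_top"
  proof (intro allI impI)
    fix x0 :: real and x' :: "real^'m"
    assume ex: "0 < \<epsilon> * x0"
    have x0: "x0 \<noteq> 0" using ex by auto
    have ax: "\<bar>x0\<bar> > 0" using x0 by simp
    define W where "W = norm x' ^ 2"
    define E where "E = (\<lambda>c::real. (\<Sum>n\<le>l'. x0 ^ n * hs n x' * c powr (real n - real l')) * (x0^2 + W / c^2) powr (- real_of_int k / 2))"
    have ev: "eventually (\<lambda>c. E c = c powr - (real l' + real l - 2 * real_of_int k) * aa hs l' k (c\<^sup>2 * x0, c *\<^sub>R x')) at_top"
      using eventually_ge_at_top[of 1] eventually_ge_at_top[of "1 / \<bar>x0\<bar>"]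
    proof eventually_elim
      case (elim c)
      have c: "c > 0" using elim by simp
      have "1 \<le> c * \<bar>x0\<bar>" using elim ax by (simp add: field_simps)
      also have "\<dots> \<le> c * c * \<bar>x0\<bar>" using elim ax by (simp add: mult_right_mono)
      finally have "1 \<le> norm (c^2 * x0)" by (simp add: power2_eq_square abs_mult)
      then have n: "norm (c^2 * x0, c *\<^sub>R x') \<ge> 1" using norm_fst_le[of "c^2 * x0" "c *\<^sub>R x'"] by linarith
      have "aa hs l' k (c\<^sup>2 * x0, c *\<^sub>R x') = (\<Sum>n\<le>l'. c ^ (l + n) * x0 ^ n * hs n x') * (c^4 * x0^2 + c^2 * W) powr (- real_of_int k / 2)"
        unfolding W_def by (rule aa_parab[OF l'l hom c n])
      also have "c^4 * x0^2 + c^2 * W = c^4 * (x0^2 + W / c^2)" using c by (simp add: field_simps eval_nat_numeral)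
      also have "(c^4 * (x0^2 + W / c^2)) powr (- real_of_int k / 2) = (c^4) powr (- real_of_int k / 2) * (x0^2 + W / c^2) powr (- real_of_int k / 2)"
        by (rule powr_mult)
      finally have "c powr - (real l' + real l - 2 * real_of_int k) * aa hs l' k (c\<^sup>2 * x0, c *\<^sub>R x') =
          (\<Sum>n\<le>l'. x0 ^ n * hs n x' * (c powr - (real l' + real l - 2 * real_of_int k) * c ^ (l + n) * (c^4) powr (- real_of_int k / 2))) * (x0^2 + W / c^2) powr (- real_of_int k / 2)"
        by (simp add: sum_distrib_left sum_distrib_right ac_simps)
      also have "(\<lambda>n. c powr - (real l' + real l - 2 * real_of_int k) * c ^ (l + n) * (c^4) powr (- real_of_int k / 2)) = (\<lambda>n. c powr (real n - real l'))"
      proof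
        fix n
        show "c powr - (real l' + real l - 2 * real_of_int k) * c ^ (l + n) * (c^4) powr (- real_of_int k / 2) = c powr (real n - real l')"
          using c
          apply (simp only: pw_pow powr_powr)
          apply (simp only: powr_add[symmetric])
          apply (simp add: algebra_simps)
          done
      qed
      finally show ?case unfolding E_def by simp
    qed
    have lim: "(E \<longlongrightarrow> (x0 ^ l' * hs l' x') * (x0^2) powr (- real_of_int k / 2)) at_top"
      unfolding E_def
    proof (intro tendsto_mult tendsto_powr)
      have "((\<lambda>c::real. x0 ^ n * hs n x' * c powr (real n - real l')) \<longlongrightarrow> (if n = l' then x0 ^ l' * hs l' x' else 0)) at_top"
        if "n \<in> {..l'}" for n
      proof (cases "n = l'")
        case True
        have "eventually (\<lambda>c::real. x0 ^ l' * hs l' x' = x0 ^ n * hs n x' * c powr (real n - real l')) at_top"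
          using eventually_gt_at_top[of 0] by eventually_elim (simp add: True)
        then have "((\<lambda>c::real. x0 ^ n * hs n x' * c powr (real n - real l')) \<longlongrightarrow> x0 ^ l' * hs l' x') at_top"
          by (rule Lim_transform_eventually[OF tendsto_const])
        then show ?thesis using True by simp
      next
        case False
        then have "real n - real l' < 0" using that by simp
        then have "((\<lambda>c::real. c powr (real n - real l')) \<longlongrightarrow> 0) at_top"
          by (rule tendsto_neg_powr) (rule filterlim_ident)
        then have "((\<lambda>c::real. x0 ^ n * hs n x' * c powr (real n - real l')) \<longlongrightarrow> x0 ^ n * hs n x' * 0) at_top"
          by (intro tendsto_mult tendsto_const)
        then show ?thesis using False by simp
      qed
      then have "((\<lambda>c::real. \<Sum>n\<le>l'. x0 ^ n * hs n x' * c powr (real n - real l')) \<longlongrightarrow> (\<Sum>n\<le>l'. if n = l' then x0 ^ l' * hs l' x' else 0)) at_top"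
        by (rule tendsto_sum)
      then show "((\<lambda>c::real. \<Sum>n\<le>l'. x0 ^ n * hs n x' * c powr (real n - real l')) \<longlongrightarrow> x0 ^ l' * hs l' x') at_top"
        by simp
      have W0: "((\<lambda>c::real. W / c^2) \<longlongrightarrow> 0) at_top"
        by (rule tendsto_divide_0[OF tendsto_const]) (intro filterlim_at_top_imp_at_infinity filterlim_pow_at_top filterlim_ident, simp)
      show "((\<lambda>c::real. x0^2 + W / c^2) \<longlongrightarrow> x0^2) at_top"
        using tendsto_add[OF tendsto_const[of "x0^2"] W0] by simp
      show "x0^2 \<noteq> 0" using x0 by simp
    qed (rule tendsto_const)
    have val: "(x0 ^ l' * hs l' x') * (x0^2) powr (- real_of_int k / 2) = \<epsilon> ^ l' * \<bar>x0\<bar> powr (real l' - real_of_int k) * hs l' x'"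
    proof -
      have xe: "x0 = \<epsilon> * \<bar>x0\<bar>" using e ex by (auto simp: abs_if split: if_splits)
      have "x0 ^ l' = \<epsilon> ^ l' * \<bar>x0\<bar> ^ l'" by (subst xe) (simp add: power_mult_distrib)
      moreover have "(x0^2) powr (- real_of_int k / 2) = \<bar>x0\<bar> powr (- real_of_int k)"
        using ax pw_powr[of "\<bar>x0\<bar>" 2 "- real_of_int k / 2"] by simp
      moreover have "\<bar>x0\<bar> ^ l' * \<bar>x0\<bar> powr (- real_of_int k) = \<bar>x0\<bar> powr (real l' - real_of_int k)"
        using ax by (simp add: pw_pow powr_add[symmetric])
      ultimately show ?thesis by (simp add: ac_simps)
    qed
    show "((\<lambda>c. c powr - (real l' + real l - 2 * real_of_int k) * aa hs l' k (c\<^sup>2 * x0, c *\<^sub>R x')) \<longlongrightarrow>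
          (case (x0, x') of (x0, x') \<Rightarrow> \<epsilon> ^ l' * \<bar>x0\<bar> powr (real l' - real_of_int k) * hs l' x')) at_top"
      using Lim_transform_eventually[OF lim ev] unfolding val by simp
  qed
qed

end


theorem proposition3:
  fixes hs :: "nat \<Rightarrow> real^'m::finite \<Rightarrow> real"
    and h :: "real \<times> (real^'m) \<Rightarrow> real"
    and l l' :: nat and k :: int
  assumes "even CARD('m)"
    and "l' \<le> l"
    and "\<And>j. j \<le> l' \<Longrightarrow> hom_poly (l - j) (hs j)"
    and "hs l' \<noteq> (\<lambda>_. 0)"
    and "\<And>x0 x'. h (x0, x') = (\<Sum>j\<le>l'. x0 ^ j * hs j x')"
  shows "\<exists>a. S_eH (real l - real_of_int k) (real l' + real l - 2 * real_of_int k)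
                 (real l' + real l - 2 * real_of_int k) a
           \<and> (\<forall>\<eta>. norm \<eta> \<ge> 1 \<longrightarrow> a \<eta> = h \<eta> * norm \<eta> powr (- real_of_int k))
           \<and> (\<forall>\<epsilon>\<in>{1,-1}. heis_symbol (real l' + real l - 2 * real_of_int k) \<epsilon> a
                (\<lambda>(x0, x'). \<epsilon> ^ l' * \<bar>x0\<bar> powr (real l' - real_of_int k) * hs l' x'))"
proof (intro exI[of _ "aa hs l' k"] conjI allI impI ballI)
  note l'l = assms(2) and hom = assms(3)
  show "S_eH (real l - real_of_int k) (real l' + real l - 2 * real_of_int k)
                 (real l' + real l - 2 * real_of_int k) (aa hs l' k)"
    unfolding S_eH_def
  proof (intro conjI allI ballI)
    have "Cinf UNIV (\<lambda>z::real \<times> (real^'m). aa hs l' k (fst z, snd z))"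
      by (rule Cinf_aa[OF l'l hom Cinf_linear[OF bounded_linear_fst] Cinf_linear[OF bl_snd_nth]])
    then show "Cinf UNIV (aa hs l' k)" by simp
  next
    fix j :: 'm and \<sigma> :: real assume "\<sigma> \<in> {1,-1}"
    then show "smooth_upto (\<lambda>(\<rho>::real, u::real, v::real^'m). \<rho> \<ge> 0) (\<lambda>(\<rho>, u, v). \<rho> > 0)
          (\<lambda>(\<rho>, u, v). \<rho> powr (real l - real_of_int k) * aa hs l' k (u / \<rho>, (1 / \<rho>) *\<^sub>R setj j \<sigma> v))"
      using chart2[OF l'l hom] by blast
  next
    fix \<epsilon> :: real assume "\<epsilon> \<in> {1,-1}"
    then show "smooth_upto (\<lambda>(t::real, w::real^'m). t \<ge> 0) (\<lambda>(t, w). t > 0)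
          (\<lambda>(t, w). t powr (if \<epsilon> = 1 then real l' + real l - 2 * real_of_int k else real l' + real l - 2 * real_of_int k) *
             aa hs l' k (\<epsilon> / t\<^sup>2, (1 / t) *\<^sub>R w))"
      unfolding if_cancel using chart3[OF l'l hom] by blast
  next
    fix \<epsilon> :: real and j :: 'm and \<sigma> :: real assume "\<epsilon> \<in> {1,-1}" "\<sigma> \<in> {1,-1}"
    then show "smooth_upto (\<lambda>(s::real, q::real, v::real^'m). s \<ge> 0 \<and> q \<ge> 0) (\<lambda>(s, q, v). s > 0 \<and> q > 0)
          (\<lambda>(s, q, v). s powr (if \<epsilon> = 1 then real l' + real l - 2 * real_of_int k else real l' + real l - 2 * real_of_int k) *
              q powr (real l - real_of_int k) *
              aa hs l' k (\<epsilon> / (s\<^sup>2 * q), (1 / (s * q)) *\<^sub>R setj j \<sigma> v))"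
      unfolding if_cancel using chart4[OF l'l hom] by blast
  qed
next
  fix \<eta> :: "real \<times> (real^'m)" assume "1 \<le> norm \<eta>"
  then have "aa hs l' k \<eta> = hh hs l' \<eta> * norm \<eta> powr (- real_of_int k)" using aa_big[OF assms(2,3)] by blast
  moreover have "hh hs l' \<eta> = h \<eta>" unfolding hh_def using assms(5)[of "fst \<eta>" "snd \<eta>"] by simp
  ultimately show "aa hs l' k \<eta> = h \<eta> * norm \<eta> powr (- real_of_int k)" by simp
next
  fix \<epsilon> :: real assume "\<epsilon> \<in> {1,-1}"
  then show "heis_symbol (real l' + real l - 2 * real_of_int k) \<epsilon> (aa hs l' k)
                (\<lambda>(x0, x'). \<epsilon> ^ l' * \<bar>x0\<bar> powr (real l' - real_of_int k) * hs l' x')"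
    using heis[OF assms(2,3)] by blast
qed


end
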